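(* Let $Y$ be an integrable random sup-measure on $E$. Then almost surely $Y$ is a scaled indicator sup-measure, i.e. $Y(\cdot)=c\,\mathbf 1_{F\cap\,\cdot\,\neq\emptyset}$ for some (random) $c\ge0$ and closed $F\subset E$, if and only if $$\mathbb E\int^e f\,dY=\mathbb E\int f\,dY\qquad\text{for all } f\in\mathrm{USC}.$$
   Context: $E$ is a locally compact Hausdorff second countable space; $\mathcal K$ its compact subsets. A sup-measure on $E$ is a Choquet capacity $\varphi$ (non-decreasing, $\varphi(\emptyset)=0$, $\varphi(A_n)\uparrow\varphi(A)$ if $A_n\uparrow A$, $\varphi(K_n)\downarrow\varphi(K)$ for compact $K_n\downarrow K$), finite on compacts, with $\varphi(\bigcup_j G_j)=\sup_j\varphi(G_j)$ for all families of open sets; a random sup-measure is a random element of the space of sup-measures (Borel $\sigma$-algebra of the sup-vague topology); $Y$ is integrable if $\mathbb E\,Y(K)<\infty$ for all $K\in\mathcal K$. $\mathrm{USC}$: bounded non-negative upper semicontinuous functions on $E$ with relatively compact support. For $f\in\mathrm{USC}$: extremal integral $\int^e f\,d\varphi=\sup\{\varphi(K)\inf_{x\in K}f(x):K\in\mathcal K\}$; Choquet integral $\int f\,d\varphi=\int_0^\infty\varphi(\{f\ge t\})\,dt$. *)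

theory Defs
  imports "HOL-Analysis.Analysis" "HOL-Probability.Probability"
begin

definition choquet_capacity :: "('a::topological_space set \<Rightarrow> ennreal) \<Rightarrow> bool" where
  "choquet_capacity \<phi> \<longleftrightarrow>
     (\<forall>A B. A \<subseteq> B \<longrightarrow> \<phi> A \<le> \<phi> B) \<and>
     \<phi> {} = 0 \<and>
     (\<forall>A :: nat \<Rightarrow> 'a set. incseq A \<longrightarrow> (\<lambda>n. \<phi> (A n)) \<longlonglongrightarrow> \<phi> (\<Union>n. A n)) \<and>
     (\<forall>K :: nat \<Rightarrow> 'a set. (\<forall>n. compact (K n)) \<and> decseq K \<longrightarrow>
          (\<lambda>n. \<phi> (K n)) \<longlonglongrightarrow> \<phi> (\<Inter>n. K n))"

definition sup_measure :: "('a::topological_space set \<Rightarrow> ennreal) \<Rightarrow> bool" where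
  "sup_measure \<phi> \<longleftrightarrow> choquet_capacity \<phi> \<and>
     (\<forall>K. compact K \<longrightarrow> \<phi> K < \<infinity>) \<and>
     (\<forall>\<G>. (\<forall>G\<in>\<G>. open G) \<longrightarrow> \<phi> (\<Union>\<G>) = (SUP G\<in>\<G>. \<phi> G))"

definition sup_measures :: "('a::topological_space set \<Rightarrow> ennreal) set" where
  "sup_measures = {\<phi>. sup_measure \<phi>}"

definition sup_vague_topology :: "('a::topological_space set \<Rightarrow> ennreal) topology" where
  "sup_vague_topology = topology_generated_by
     ({{\<phi>\<in>sup_measures. \<phi> K < x} | K x. compact K} \<union>
      {{\<phi>\<in>sup_measures. x < \<phi> G} | G x. open G})"

definition sup_vague_borel :: "('a::topological_space set \<Rightarrow> ennreal) measure" where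
  "sup_vague_borel = sigma (topspace sup_vague_topology) {U. openin sup_vague_topology U}"

definition random_sup_measure :: "'w measure \<Rightarrow> ('w \<Rightarrow> 'a::topological_space set \<Rightarrow> ennreal) \<Rightarrow> bool" where
  "random_sup_measure M Y \<longleftrightarrow> Y \<in> M \<rightarrow>\<^sub>M sup_vague_borel"

definition integrable_rsm :: "'w measure \<Rightarrow> ('w \<Rightarrow> 'a::topological_space set \<Rightarrow> ennreal) \<Rightarrow> bool" where
  "integrable_rsm M Y \<longleftrightarrow> (\<forall>K. compact K \<longrightarrow> (\<integral>\<^sup>+ w. Y w K \<partial>M) < \<infinity>)"

definition USC :: "('a::topological_space \<Rightarrow> real) set" where
  "USC = {f. bounded (range f) \<and> (\<forall>x. 0 \<le> f x) \<and>
             (\<forall>t. closed {x. t \<le> f x}) \<and> compact (closure {x. f x \<noteq> 0})}"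

definition extremal_integral :: "('a::topological_space \<Rightarrow> real) \<Rightarrow> ('a set \<Rightarrow> ennreal) \<Rightarrow> ennreal" where
  "extremal_integral f \<phi> = (SUP K\<in>{K. compact K}. \<phi> K * ennreal (INF x\<in>K. f x))"

definition choquet_integral :: "('a \<Rightarrow> real) \<Rightarrow> ('a set \<Rightarrow> ennreal) \<Rightarrow> ennreal" where
  "choquet_integral f \<phi> = (\<integral>\<^sup>+ t\<in>{0..}. \<phi> {x. t \<le> f x} \<partial>lborel)"

definition scaled_indicator_sup_measure :: "('a::topological_space set \<Rightarrow> ennreal) \<Rightarrow> bool" where
  "scaled_indicator_sup_measure \<phi> \<longleftrightarrow>
     (\<exists>c::real. \<exists>F. c \<ge> 0 \<and> closed F \<and>
        (\<forall>A. \<phi> A = (if F \<inter> A \<noteq> {} then ennreal c else 0)))"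

end

theory Submission
  imports Defs
begin


lemma space_svb: "space sup_vague_borel = topspace sup_vague_topology"
  unfolding sup_vague_borel_def by (rule space_measure_of) (auto dest: openin_subset)

lemma sets_svb_open: "openin sup_vague_topology U \<Longrightarrow> U \<in> sets sup_vague_borel"
  unfolding sup_vague_borel_def
  by (subst sets_measure_of) (auto dest: openin_subset)

lemma topspace_svt: "topspace sup_vague_topology \<subseteq> sup_measures"
  unfolding sup_vague_topology_def by auto

lemma rsm_sup_measure:
  assumes "random_sup_measure M Y" "w \<in> space M"
  shows "sup_measure (Y w)"
proof -
  have "Y w \<in> space sup_vague_borel"
    using assms(1) measurable_space[OF _ assms(2)] unfolding random_sup_measure_def by metis
  then show ?thesis using topspace_svt space_svb unfolding sup_measures_def by auto
qed

lemma rsm_measurable: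
  fixes Y :: "'w \<Rightarrow> 'a::topological_space set \<Rightarrow> ennreal"
  assumes "random_sup_measure M Y" "compact C"
  shows "(\<lambda>w. Y w C) \<in> borel_measurable M"
proof (rule borel_measurableI_less)
  fix x :: ennreal
  let ?U = "{\<phi>\<in>sup_measures. \<phi> C < x}"
  have op: "openin sup_vague_topology ?U"
    unfolding sup_vague_topology_def openin_topology_generated_by_iff
    using assms(2) by (intro generate_topology_on.Basis) blast
  have Ym: "Y \<in> M \<rightarrow>\<^sub>M sup_vague_borel" using assms unfolding random_sup_measure_def by auto
  have "Y -` ?U \<inter> space M \<in> sets M"
    using measurable_sets[OF Ym sets_svb_open[OF op]] .
  moreover have "Y -` ?U \<inter> space M = {w\<in>space M. Y w C < x}"
    using rsm_sup_measure[OF assms(1)] unfolding sup_measures_def by auto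
  ultimately show "{w\<in>space M. Y w C < x} \<in> sets M" by simp
qed



lemma scaled_ext_eq_choq:
  fixes \<phi> :: "'a::topological_space set \<Rightarrow> ennreal" and f :: "'a \<Rightarrow> real"
  assumes "scaled_indicator_sup_measure \<phi>" "f \<in> USC"
  shows "extremal_integral f \<phi> = choquet_integral f \<phi>"
proof -
  obtain c F where c: "c \<ge> 0" "closed F" and phi: "\<And>A. \<phi> A = (if F \<inter> A \<noteq> {} then ennreal c else 0)"
    using assms(1) unfolding scaled_indicator_sup_measure_def by blast
  have f0: "\<And>x. 0 \<le> f x" and fb: "bounded (range f)" using assms(2) unfolding USC_def by auto
  show ?thesis
  proof (cases "F = {}")
    case True
    then have "\<And>A. \<phi> A = 0" using phi by auto
    then show ?thesis unfolding extremal_integral_def choquet_integral_def by (simp add: SUP_constant bot_ennreal)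
  next
    case False
    define s where "s = (SUP x\<in>F. f x)"
    have bdd: "bdd_above (f ` F)" by (rule bdd_above_mono[OF bounded_imp_bdd_above[OF fb]]) (rule image_mono, simp)
    have fs: "\<And>x. x \<in> F \<Longrightarrow> f x \<le> s" unfolding s_def using bdd by (intro cSUP_upper)
    have s0: "0 \<le> s" using False fs f0 by (meson ex_in_conv order_trans)
    have e1: "extremal_integral f \<phi> \<le> ennreal c * ennreal s"
      unfolding extremal_integral_def
    proof (rule SUP_least)
      fix K :: "'a set" assume "K \<in> {K. compact K}"
      show "\<phi> K * ennreal (INF x\<in>K. f x) \<le> ennreal c * ennreal s"
      proof (cases "F \<inter> K = {}")
        case True then show ?thesis using phi by simp
      next
        case False
        then obtain x where x: "x \<in> F" "x \<in> K" by blast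
        have "(INF x\<in>K. f x) \<le> f x" using x f0 by (intro cINF_lower) (auto intro!: bdd_belowI2[where m=0])
        also have "\<dots> \<le> s" using fs x by auto
        finally show ?thesis using phi False by (auto intro!: mult_left_mono ennreal_leI)
      qed
    qed
    have "ennreal c * ennreal s = ennreal c * (SUP x\<in>F. ennreal (f x))"
    proof -
      obtain B where B: "\<And>x. norm (f x) \<le> B" using fb unfolding bounded_iff by auto
      have "(SUP x\<in>F. ennreal (f x)) \<le> ennreal B" using B by (intro SUP_least ennreal_leI) (metis abs_ge_self order_trans real_norm_def)
      then have "(SUP x\<in>F. ennreal (f x)) \<noteq> \<top>" by (metis ennreal_neq_top top.extremum_uniqueI)
      then show ?thesis unfolding s_def using False by (simp add: ennreal_SUP)
    qed
    also have "\<dots> = (SUP x\<in>F. ennreal c * ennreal (f x))" by (rule SUP_mult_left_ennreal)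
    also have "\<dots> \<le> extremal_integral f \<phi>"
      unfolding extremal_integral_def
    proof (rule SUP_least)
      fix x assume x: "x \<in> F"
      have "\<phi> {x} * ennreal (INF y\<in>{x}. f y) = ennreal c * ennreal (f x)" using phi x by simp
      then show "ennreal c * ennreal (f x) \<le> (SUP K\<in>{K. compact K}. \<phi> K * ennreal (INF x\<in>K. f x))"
        by (metis (mono_tags, lifting) SUP_upper compact_sing mem_Collect_eq)
    qed
    finally have ext: "extremal_integral f \<phi> = ennreal c * ennreal s" using e1 by auto
    have ae: "AE t in lborel. \<phi> {x. t \<le> f x} * indicator {0..} t = ennreal c * indicator {0<..<s} t"
      using AE_lborel_singleton[of 0] AE_lborel_singleton[of s]
    proof eventually_elim
      case (elim t)
      show ?case
      proof (cases "t < 0")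
        case True then show ?thesis by simp
      next
        case False
        with elim have t: "0 < t" by simp
        show ?thesis
        proof (cases "t < s")
          case True
          then obtain x where "x \<in> F" "t < f x" using less_cSUP_iff[OF \<open>F \<noteq> {}\<close> bdd] s_def by auto
          then have "F \<inter> {x. t \<le> f x} \<noteq> {}" by auto
          then show ?thesis using phi t True by simp
        next
          case False
          with elim have "s < t" by simp
          then have "F \<inter> {x. t \<le> f x} = {}" using fs by force
          then show ?thesis using phi t False by simp
        qed
      qed
    qed
    have "choquet_integral f \<phi> = (\<integral>\<^sup>+ t. ennreal c * indicator {0<..<s} t \<partial>lborel)"
      unfolding choquet_integral_def by (rule nn_integral_cong_AE[OF ae])
    also have "\<dots> = ennreal c * ennreal s" using s0 by (simp add: nn_integral_cmult_indicator)
    finally show ?thesis using ext by simp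
  qed
qed



lemma ind2_sets:
  fixes K L :: "'a set"
  shows "{x. t \<le> indicator K x + indicator L x} =
    (if t \<le> 0 then UNIV else if t \<le> 1 then K \<union> L else if t \<le> (2::real) then K \<inter> L else {})"
  by (auto simp: indicator_def)

lemma ind2_USC:
  fixes K L :: "'a::t2_space set"
  assumes "compact K" "compact L"
  shows "(\<lambda>x. indicator K x + indicator L x :: real) \<in> USC"
proof -
  have "bounded (range (\<lambda>x. indicator K x + indicator L x :: real))"
    unfolding bounded_iff by (rule exI[of _ 2]) (auto simp: indicator_def)
  moreover have "closed {x. t \<le> indicator K x + indicator L x}" for t :: real
    unfolding ind2_sets using assms by (auto intro: compact_imp_closed)
  moreover have "{x. indicator K x + indicator L x \<noteq> (0::real)} = K \<union> L"
    by (auto simp: indicator_def)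
  then have "compact (closure {x. indicator K x + indicator L x \<noteq> (0::real)})"
    using assms by (simp add: compact_imp_closed closure_closed compact_Un)
  ultimately show ?thesis unfolding USC_def by auto
qed

lemma ind2_choquet:
  fixes \<phi> :: "'a set \<Rightarrow> ennreal"
  assumes "\<phi> {} = 0"
  shows "choquet_integral (\<lambda>x. indicator K x + indicator L x) \<phi> = \<phi> (K \<union> L) + \<phi> (K \<inter> L)"
proof -
  have ae: "AE t in lborel. \<phi> {x. (t::real) \<le> indicator K x + indicator L x} * indicator {0..} t =
     \<phi> (K \<union> L) * indicator {0<..1} t + \<phi> (K \<inter> L) * indicator {1<..2} t"
    using AE_lborel_singleton[of "0::real"]
    by eventually_elim (auto simp: ind2_sets assms split: split_indicator)
  have "choquet_integral (\<lambda>x. indicator K x + indicator L x) \<phi> =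
     (\<integral>\<^sup>+ t. \<phi> (K \<union> L) * indicator {0<..1} t + \<phi> (K \<inter> L) * indicator {1<..2::real} t \<partial>lborel)"
    unfolding choquet_integral_def by (rule nn_integral_cong_AE[OF ae])
  also have "\<dots> = \<phi> (K \<union> L) + \<phi> (K \<inter> L)"
    by (simp add: nn_integral_add nn_integral_cmult_indicator)
  finally show ?thesis .
qed

lemma ind2_ext:
  fixes \<phi> :: "'a::topological_space set \<Rightarrow> ennreal"
  assumes "\<phi> {} = 0" "\<And>A B. A \<subseteq> B \<Longrightarrow> \<phi> A \<le> \<phi> B"
  shows "extremal_integral (\<lambda>x. indicator K x + indicator L x) \<phi> \<le> max (\<phi> (K \<union> L)) (2 * \<phi> (K \<inter> L))"
  unfolding extremal_integral_def
proof (rule SUP_least)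
  fix C :: "'a set" assume "C \<in> {K. compact K}"
  let ?f = "\<lambda>x. indicator K x + indicator L x :: real"
  have bb: "bdd_below (?f ` C)" by (intro bdd_belowI2[where m=0]) (auto simp: indicator_def)
  show "\<phi> C * ennreal (INF x\<in>C. ?f x) \<le> max (\<phi> (K \<union> L)) (2 * \<phi> (K \<inter> L))"
  proof (cases "C = {}")
    case True then show ?thesis using assms by simp
  next
    case ne: False
    show ?thesis
    proof (cases "C \<subseteq> K \<inter> L")
      case True
      obtain x where x: "x \<in> C" using ne by blast
      have "(INF x\<in>C. ?f x) \<le> ?f x" using bb x by (rule cINF_lower)
      also have "\<dots> = 2" using x True by (auto simp: indicator_def)
      finally have "\<phi> C * ennreal (INF x\<in>C. ?f x) \<le> \<phi> (K \<inter> L) * ennreal 2"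
        using assms(2)[OF True] by (intro mult_mono ennreal_leI) auto
      then show ?thesis by (simp add: mult.commute le_max_iff_disj)
    next
      case nKL: False
      then obtain x where x: "x \<in> C" "x \<notin> K \<inter> L" by blast
      have i: "(INF x\<in>C. ?f x) \<le> ?f x" using bb x(1) by (rule cINF_lower)
      show ?thesis
      proof (cases "C \<subseteq> K \<union> L")
        case True
        have "?f x \<le> 1" using x by (auto simp: indicator_def)
        with i have "\<phi> C * ennreal (INF x\<in>C. ?f x) \<le> \<phi> (K \<union> L) * ennreal 1"
          using assms(2)[OF True] by (intro mult_mono ennreal_leI) auto
        then show ?thesis by (simp add: le_max_iff_disj)
      next
        case False
        then obtain y where y: "y \<in> C" "y \<notin> K \<union> L" by blast
        have "(INF x\<in>C. ?f x) \<le> ?f y" using bb y(1) by (rule cINF_lower)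
        also have "\<dots> = 0" using y by (auto simp: indicator_def)
        finally have "ennreal (INF x\<in>C. ?f x) = 0" by (simp add: ennreal_eq_0_iff)
        then show ?thesis by simp
      qed
    qed
  qed
qed



definition Dok :: "'a::topological_space set set \<Rightarrow> 'a set set set \<Rightarrow> bool" where
  "Dok B S \<longleftrightarrow> finite S \<and> (\<forall>T\<in>S. finite T \<and> T \<noteq> {} \<and> T \<subseteq> closure ` B)"

definition Dfam :: "'a::topological_space set set \<Rightarrow> 'a set set" where
  "Dfam B = (\<lambda>S. \<Union> (\<Inter> ` S)) ` Collect (Dok B)"

lemma DfamI: "Dok B S \<Longrightarrow> K = \<Union> (\<Inter> ` S) \<Longrightarrow> K \<in> Dfam B"
  unfolding Dfam_def by simp

lemma DfamE: assumes "K \<in> Dfam B" obtains S where "Dok B S" "K = \<Union> (\<Inter> ` S)"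
  using assms unfolding Dfam_def by blast

lemma Dfam_Un: assumes "K \<in> Dfam B" "L \<in> Dfam B" shows "K \<union> L \<in> Dfam B"
proof -
  obtain S1 where 1: "Dok B S1" "K = \<Union> (\<Inter> ` S1)" using assms(1) by (rule DfamE)
  obtain S2 where 2: "Dok B S2" "L = \<Union> (\<Inter> ` S2)" using assms(2) by (rule DfamE)
  have "Dok B (S1 \<union> S2)" using 1(1) 2(1) unfolding Dok_def ball_Un finite_Un by blast
  moreover have "K \<union> L = \<Union> (\<Inter> ` (S1 \<union> S2))" using 1 2 by simp
  ultimately show ?thesis by (rule DfamI)
qed

lemma Dfam_Inter: "finite T \<Longrightarrow> T \<noteq> {} \<Longrightarrow> T \<subseteq> B \<Longrightarrow> \<Inter> (closure ` T) \<in> Dfam B"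
  by (rule DfamI[of _ "{closure ` T}"]) (auto simp: Dok_def)

lemma Dfam_Union: "finite T \<Longrightarrow> T \<subseteq> B \<Longrightarrow> \<Union> (closure ` T) \<in> Dfam B"
  by (rule DfamI[of _ "(\<lambda>U. {closure U}) ` T"]) (auto simp: Dok_def)

lemma Dfam_compact:
  fixes B :: "'a::t2_space set set"
  assumes "\<forall>U\<in>B. compact (closure U)" "K \<in> Dfam B"
  shows "compact K"
proof -
  obtain S where S: "Dok B S" "K = \<Union> (\<Inter> ` S)" using assms(2) by (rule DfamE)
  have *: "compact (\<Inter> T)" if "T \<in> S" for T
  proof -
    have T: "finite T" "T \<noteq> {}" "T \<subseteq> closure ` B" using S(1) that unfolding Dok_def by auto
    from T(2) obtain V where "V \<in> T" by blast
    then obtain U where "U \<in> B" "V = closure U" using T(3) by blast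
    then have "compact V" using assms(1) by simp
    moreover have "closed (\<Inter> T)" using T(3) by (intro closed_Inter) auto
    moreover have "\<Inter> T \<subseteq> V" using \<open>V \<in> T\<close> by (rule Inter_lower)
    ultimately show ?thesis by (metis compact_Int_closed inf.absorb_iff2)
  qed
  have "compact (\<Union> (\<Inter> ` S))"
  proof (rule compact_Union)
    show "finite (\<Inter> ` S)" using S(1) unfolding Dok_def by simp
    show "\<And>T. T \<in> \<Inter> ` S \<Longrightarrow> compact T" using * by blast
  qed
  then show ?thesis using S(2) by simp
qed

lemma Dfam_countable:
  assumes "countable B"
  shows "countable (Dfam B)"
proof -
  have c1: "countable {T. finite T \<and> T \<subseteq> closure ` B}"
    by (rule countable_Collect_finite_subset[OF countable_image[OF assms]])
  have c2: "countable {S. finite S \<and> S \<subseteq> {T. finite T \<and> T \<subseteq> closure ` B}}"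
    by (rule countable_Collect_finite_subset[OF c1])
  have "Collect (Dok B) \<subseteq> {S. finite S \<and> S \<subseteq> {T. finite T \<and> T \<subseteq> closure ` B}}"
    unfolding Dok_def by auto
  then have "countable (Collect (Dok B))" using c2 by (rule countable_subset)
  then show ?thesis unfolding Dfam_def by (rule countable_image)
qed



lemma det:
  fixes \<phi> :: "'a::t2_space set \<Rightarrow> ennreal" and B :: "'a set set"
  assumes sm: "sup_measure \<phi>"
    and Bc: "countable B" and Bo: "\<forall>U\<in>B. open U" and Bk: "\<forall>U\<in>B. compact (closure U)"
    and Bb: "\<And>S x. open S \<Longrightarrow> x \<in> S \<Longrightarrow> \<exists>U\<in>B. x \<in> U \<and> U \<subseteq> S"
    and P: "\<forall>K\<in>Dfam B. \<forall>L\<in>Dfam B. \<phi> (K \<inter> L) = 0 \<or> \<phi> (K \<inter> L) = \<phi> (K \<union> L)"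
  shows "scaled_indicator_sup_measure \<phi>"
proof -
  have cc: "choquet_capacity \<phi>" and fin: "\<And>K. compact K \<Longrightarrow> \<phi> K < \<infinity>"
    and sup: "\<And>\<G>. (\<forall>G\<in>\<G>. open G) \<Longrightarrow> \<phi> (\<Union>\<G>) = (SUP G\<in>\<G>. \<phi> G)"
    using sm unfolding sup_measure_def by auto
  have mono: "\<And>A C. A \<subseteq> C \<Longrightarrow> \<phi> A \<le> \<phi> C"
    using cc unfolding choquet_capacity_def by blast
  have inc: "\<And>A. incseq A \<Longrightarrow> (\<lambda>n. \<phi> (A n)) \<longlonglongrightarrow> \<phi> (\<Union>n. A n)"
    using cc unfolding choquet_capacity_def by blast
  have dec: "\<And>K. (\<forall>n. compact (K n)) \<Longrightarrow> decseq K \<Longrightarrow> (\<lambda>n. \<phi> (K n)) \<longlonglongrightarrow> \<phi> (\<Inter>n. K n)"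
    using cc unfolding choquet_capacity_def by blast
  have Bne: "B \<noteq> {}" using Bb[of UNIV undefined] by auto
  define b where "b = from_nat_into B"
  have bB: "b i \<in> B" for i using from_nat_into[OF Bne] b_def by simp
  define Dm where "Dm m = \<Union>(closure ` b ` {..<m})" for m
  have Dm_D: "Dm m \<in> Dfam B" for m
    unfolding Dm_def using bB by (intro Dfam_Union) auto
  have Dm_inc: "incseq Dm"
    unfolding incseq_def Dm_def by (intro allI impI Union_mono image_mono) auto
  have Dm_UN: "(\<Union>m. Dm m) = UNIV"
  proof (intro set_eqI iffI)
    fix x :: 'a
    obtain U where U: "U \<in> B" "x \<in> U" using Bb[of UNIV x] by auto
    then obtain i where "b i = U" using from_nat_into_surj[OF Bc] b_def by blast
    then have "x \<in> closure (b i)" using U closure_subset by blast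
    then have "x \<in> Dm (Suc i)" unfolding Dm_def by auto
    then show "x \<in> (\<Union>m. Dm m)" by blast
  qed auto
  define c where "c = \<phi> UNIV"
  have vals: "\<phi> K = 0 \<or> \<phi> K = c" if K: "K \<in> Dfam B" for K
  proof (cases "\<phi> K = 0")
    case True then show ?thesis by simp
  next
    case False
    note nz = False
    have eq: "\<phi> (K \<union> Dm m) = \<phi> K" for m
    proof -
      have "\<phi> (K \<inter> (K \<union> Dm m)) = 0 \<or> \<phi> (K \<inter> (K \<union> Dm m)) = \<phi> (K \<union> (K \<union> Dm m))"
        using P K Dfam_Un[OF K Dm_D] by blast
      moreover have "K \<inter> (K \<union> Dm m) = K" "K \<union> (K \<union> Dm m) = K \<union> Dm m" by auto
      ultimately show ?thesis using nz by simp
    qed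
    have "incseq (\<lambda>m. K \<union> Dm m)" using Dm_inc unfolding incseq_def by auto
    then have "(\<lambda>m. \<phi> (K \<union> Dm m)) \<longlonglongrightarrow> \<phi> (\<Union>m. K \<union> Dm m)" by (rule inc)
    moreover have "(\<Union>m. K \<union> Dm m) = UNIV" using Dm_UN by auto
    ultimately have "(\<lambda>m. \<phi> K) \<longlonglongrightarrow> c" using eq c_def by simp
    then show ?thesis by (simp add: LIMSEQ_const_iff)
  qed
  have cfin: "c < \<top>"
  proof (rule ccontr)
    assume "\<not> c < \<top>"
    then have ct: "c = \<top>" using top.not_eq_extremum by blast
    have "\<phi> (Dm m) = 0" for m
      using vals[OF Dm_D[of m]] fin[OF Dfam_compact[OF Bk Dm_D[of m]]] ct by auto
    moreover have "(\<lambda>m. \<phi> (Dm m)) \<longlonglongrightarrow> c" using inc[OF Dm_inc] Dm_UN c_def by simp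
    ultimately have "c = 0" by (simp add: LIMSEQ_const_iff)
    with ct show False by simp
  qed
  define F where "F = - \<Union>{U\<in>B. \<phi> U = 0}"
  have Fc: "closed F" unfolding F_def using Bo by (intro closed_Compl open_Union) auto
  have out: "\<phi> A = 0" if "F \<inter> A = {}" for A
  proof -
    have "A \<subseteq> \<Union>{U\<in>B. \<phi> U = 0}" using that F_def by auto
    then have "\<phi> A \<le> \<phi> (\<Union>{U\<in>B. \<phi> U = 0})" by (rule mono)
    also have "\<dots> = (SUP U\<in>{U\<in>B. \<phi> U = 0}. \<phi> U)" using Bo by (intro sup) auto
    also have "\<dots> = 0" by (intro antisym SUP_least) auto
    finally show ?thesis by simp
  qed
  have pt: "\<phi> {x} = c" if xF: "x \<in> F" for x
  proof -
    define Bx where "Bx = {U\<in>B. x \<in> U}"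
    have Bxc: "countable Bx" using Bc by (simp add: Bx_def)
    have Bxne: "Bx \<noteq> {}" using Bb[of UNIV x] Bx_def by auto
    define u where "u = from_nat_into Bx"
    have uB: "u i \<in> B" "x \<in> u i" for i using from_nat_into[OF Bxne, of i] u_def Bx_def by auto
    define Kn where "Kn n = \<Inter>(closure ` u ` {..n})" for n
    have KnD: "Kn n \<in> Dfam B" for n unfolding Kn_def using uB by (intro Dfam_Inter) auto
    have Kc: "\<forall>n. compact (Kn n)" using Dfam_compact[OF Bk KnD] by blast
    have Kdec: "decseq Kn" unfolding decseq_def Kn_def by (intro allI impI Inter_anti_mono image_mono) auto
    have Kint: "(\<Inter>n. Kn n) = {x}"
    proof
      show "{x} \<subseteq> (\<Inter>n. Kn n)" unfolding Kn_def using uB closure_subset by blast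
      show "(\<Inter>n. Kn n) \<subseteq> {x}"
      proof
        fix y assume y: "y \<in> (\<Inter>n. Kn n)"
        show "y \<in> {x}"
        proof (rule ccontr)
          assume "y \<notin> {x}" then have "x \<noteq> y" by auto
          then obtain U V where UV: "open U" "open V" "x \<in> U" "y \<in> V" "U \<inter> V = {}"
            using hausdorff[OF \<open>x \<noteq> y\<close>] by blast
          obtain W where W: "W \<in> B" "x \<in> W" "W \<subseteq> U" using Bb[OF UV(1,3)] by blast
          then have "W \<in> Bx" by (simp add: Bx_def)
          then obtain i where i: "u i = W" using from_nat_into_surj[OF Bxc] u_def by blast
          have "V \<inter> W = {}" using UV(5) W(3) by blast
          then have "V \<inter> closure W = {}" using open_Int_closure_eq_empty[OF UV(2)] by blast
          moreover have "y \<in> Kn i" using y by blast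
          then have "y \<in> closure W" using i unfolding Kn_def by auto
          ultimately show False using UV(4) by blast
        qed
      qed
    qed
    have Kval: "\<phi> (Kn n) = c" for n
    proof -
      have "open (\<Inter>(u ` {..n}))" using uB Bo by (intro open_Inter) auto
      moreover have "x \<in> \<Inter>(u ` {..n})" using uB by auto
      ultimately obtain W where W: "W \<in> B" "x \<in> W" "W \<subseteq> \<Inter>(u ` {..n})" using Bb by blast
      have nz: "\<phi> W \<noteq> 0" using W xF F_def by auto
      have "W \<subseteq> closure (u i)" if "i \<le> n" for i
      proof -
        have "W \<subseteq> u i" using W(3) that by blast
        then show ?thesis using closure_subset by (rule subset_trans)
      qed
      then have "W \<subseteq> Kn n" unfolding Kn_def by blast
      then have "\<phi> W \<le> \<phi> (Kn n)" by (rule mono)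
      then have "\<phi> (Kn n) \<noteq> 0" using nz by auto
      then show ?thesis using vals[OF KnD] by auto
    qed
    have "(\<lambda>n. \<phi> (Kn n)) \<longlonglongrightarrow> \<phi> (\<Inter>n. Kn n)" using dec Kc Kdec by blast
    then have "(\<lambda>n. c) \<longlonglongrightarrow> \<phi> {x}" using Kval Kint by simp
    then show ?thesis by (simp add: LIMSEQ_const_iff)
  qed
  show ?thesis unfolding scaled_indicator_sup_measure_def
  proof (intro exI conjI allI)
    show "0 \<le> enn2real c" by simp
    show "closed F" by (rule Fc)
    fix A
    show "\<phi> A = (if F \<inter> A \<noteq> {} then ennreal (enn2real c) else 0)"
    proof (cases "F \<inter> A = {}")
      case True then show ?thesis using out by simp
    next
      case False
      then obtain x where x: "x \<in> F" "x \<in> A" by blast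
      have "c = \<phi> {x}" using pt[OF x(1)] by simp
      also have "\<dots> \<le> \<phi> A" using x(2) by (intro mono) auto
      finally have "c \<le> \<phi> A" .
      moreover have "\<phi> A \<le> c" unfolding c_def by (intro mono) auto
      ultimately have "\<phi> A = c" by (rule antisym[rotated])
      then show ?thesis using False cfin by simp
    qed
  qed
qed



lemma enn_case:
  fixes a b :: ennreal
  assumes "a < \<top>" "b \<le> a" "a + b \<le> max a (2 * b)"
  shows "b = 0 \<or> b = a"
proof -
  obtain x where x: "0 \<le> x" "a = ennreal x" using assms(1) by (cases a) auto
  obtain y where y: "0 \<le> y" "b = ennreal y" using assms(1,2) by (cases b) auto
  have yx: "y \<le> x" using assms(2) x y by simp
  have "2 * b = ennreal (2 * y)" using y by (simp add: ennreal_mult)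
  then have "max a (2 * b) = ennreal (max x (2 * y))" using x y
    by (auto simp: max_def ennreal_le_iff)
  moreover have "a + b = ennreal (x + y)" using x y by simp
  ultimately have "x + y \<le> max x (2 * y)" using assms(3) x y
    by (metis ennreal_le_iff le_max_iff_disj max_def order.trans)
  then have "y = 0 \<or> y = x" using yx x y by (auto simp: max_def split: if_splits)
  then show ?thesis using x y by auto
qed

lemma lc_basis:
  assumes "locally_compact_space (euclidean :: 'a topology)"
  obtains B :: "'a::{t2_space, second_countable_topology} set set" where "countable B" "\<forall>U\<in>B. open U" "\<forall>U\<in>B. compact (closure U)"
    "\<And>S x. open S \<Longrightarrow> x \<in> S \<Longrightarrow> \<exists>U\<in>B. x \<in> U \<and> U \<subseteq> S"
proof -
  obtain B0 :: "'a set set" where B0: "countable B0" "topological_basis B0" using ex_countable_basis by blast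
  define B where "B = {U\<in>B0. compact (closure U)}"
  have bas: "\<exists>U\<in>B. x \<in> U \<and> U \<subseteq> S" if S: "open S" "x \<in> S" for S x
  proof -
    have "x \<in> topspace euclidean" by simp
    with assms[unfolded locally_compact_space_def]
    have "\<exists>U K. openin euclidean U \<and> compactin euclidean K \<and> x \<in> U \<and> U \<subseteq> K"
      by (rule bspec)
    then obtain V K where VK: "openin euclidean V" "compactin euclidean K" "x \<in> V" "V \<subseteq> K"
      by blast
    have Vo: "open V" using VK(1) by (simp only: open_openin)
    have Kc: "compact K" using VK(2) by simp
    note VK3 = VK(3) and VK4 = VK(4)
    have "open (V \<inter> S)" using Vo S(1) by auto
    moreover have "x \<in> V \<inter> S" using VK3 S(2) by auto
    ultimately obtain U where U: "U \<in> B0" "x \<in> U" "U \<subseteq> V \<inter> S" by (rule topological_basisE[OF B0(2)])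
    have "U \<subseteq> K" using U(3) VK4 by blast
    then have cUK: "closure U \<subseteq> K" using compact_imp_closed[OF Kc] by (rule closure_minimal)
    have "compact (K \<inter> closure U)" using compact_Int_closed[OF Kc closed_closure[of U]] .
    moreover have "K \<inter> closure U = closure U" using cUK by blast
    ultimately have "compact (closure U)" by simp
    then have "U \<in> B" using U(1) unfolding B_def by blast
    then show ?thesis using U(2,3) by blast
  qed
  have cB: "countable B" using B0(1) unfolding B_def by simp
  have oB: "\<forall>U\<in>B. open U" using topological_basis_open[OF B0(2)] unfolding B_def by blast
  have kB: "\<forall>U\<in>B. compact (closure U)" unfolding B_def by simp
  show ?thesis by (rule that[OF cB oB kB bas])
qed

lemma ae_pair:
  fixes Y :: "'w \<Rightarrow> 'a::t2_space set \<Rightarrow> ennreal"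
  assumes rsm: "random_sup_measure M Y" and int: "integrable_rsm M Y"
    and K: "compact K" and L: "compact L"
    and eq: "(\<integral>\<^sup>+ w. extremal_integral (\<lambda>x. indicator K x + indicator L x) (Y w) \<partial>M) =
             (\<integral>\<^sup>+ w. choquet_integral (\<lambda>x. indicator K x + indicator L x) (Y w) \<partial>M)"
  shows "AE w in M. Y w (K \<inter> L) = 0 \<or> Y w (K \<inter> L) = Y w (K \<union> L)"
proof -
  let ?f = "\<lambda>x. indicator K x + indicator L x :: real"
  define a where "a w = Y w (K \<union> L)" for w
  define b where "b w = Y w (K \<inter> L)" for w
  define g where "g w = max (a w) (2 * b w)" for w
  have KL: "compact (K \<union> L)" "compact (K \<inter> L)" using K L by (auto intro: compact_Un compact_Int)
  have am[measurable]: "a \<in> borel_measurable M" unfolding a_def by (rule rsm_measurable[OF rsm KL(1)])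
  have bm[measurable]: "b \<in> borel_measurable M" unfolding b_def by (rule rsm_measurable[OF rsm KL(2)])
  have gm[measurable]: "g \<in> borel_measurable M" unfolding g_def by measurable
  have props: "Y w {} = 0" "\<And>A C. A \<subseteq> C \<Longrightarrow> Y w A \<le> Y w C" if "w \<in> space M" for w
    using rsm_sup_measure[OF rsm that] unfolding sup_measure_def choquet_capacity_def by auto
  have ba: "b w \<le> a w" if "w \<in> space M" for w unfolding a_def b_def by (intro props(2)[OF that]) blast
  have choq: "choquet_integral ?f (Y w) = a w + b w" if "w \<in> space M" for w
    unfolding a_def b_def using props(1)[OF that] by (rule ind2_choquet)
  have ext: "extremal_integral ?f (Y w) \<le> g w" if "w \<in> space M" for w
    unfolding a_def b_def g_def using props[OF that] by (rule ind2_ext)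
  have gle: "g w \<le> a w + b w" if "w \<in> space M" for w
  proof -
    have "2 * b w = b w + b w" by (simp add: mult_2)
    also have "\<dots> \<le> a w + b w" using ba[OF that] by (intro add_right_mono)
    finally show ?thesis unfolding g_def by simp
  qed
  have X: "(\<integral>\<^sup>+ w. choquet_integral ?f (Y w) \<partial>M) = (\<integral>\<^sup>+ w. a w + b w \<partial>M)"
    by (rule nn_integral_cong) (rule choq)
  have "(\<integral>\<^sup>+ w. a w + b w \<partial>M) = (\<integral>\<^sup>+ w. extremal_integral ?f (Y w) \<partial>M)"
    by (simp only: eq X)
  also have "\<dots> \<le> (\<integral>\<^sup>+ w. g w \<partial>M)" using ext by (intro nn_integral_mono) auto
  finally have i1: "(\<integral>\<^sup>+ w. a w + b w \<partial>M) \<le> (\<integral>\<^sup>+ w. g w \<partial>M)" .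
  have i2: "(\<integral>\<^sup>+ w. g w \<partial>M) \<le> (\<integral>\<^sup>+ w. a w + b w \<partial>M)" using gle by (intro nn_integral_mono) auto
  have ia: "(\<integral>\<^sup>+ w. a w \<partial>M) < \<infinity>" using int KL(1) unfolding integrable_rsm_def a_def by blast
  have ib: "(\<integral>\<^sup>+ w. b w \<partial>M) < \<infinity>" using int KL(2) unfolding integrable_rsm_def b_def by blast
  have iab: "(\<integral>\<^sup>+ w. a w + b w \<partial>M) < \<infinity>" using ia ib by (simp add: nn_integral_add)
  have ig: "(\<integral>\<^sup>+ w. g w \<partial>M) = (\<integral>\<^sup>+ w. a w + b w \<partial>M)" using i1 i2 by simp
  have "(\<integral>\<^sup>+ w. (a w + b w) - g w \<partial>M) = (\<integral>\<^sup>+ w. a w + b w \<partial>M) - (\<integral>\<^sup>+ w. g w \<partial>M)"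
    by (rule nn_integral_diff) (use ig iab gle in auto)
  also have "\<dots> = 0" using ig iab by simp
  finally have "AE w in M. (a w + b w) - g w = 0"
    by (subst (asm) nn_integral_0_iff_AE) auto
  moreover have "AE w in M. a w \<noteq> \<infinity>" using ia by (intro nn_integral_noteq_infinite) auto
  moreover have "AE w in M. w \<in> space M" by (rule AE_space)
  ultimately show ?thesis
  proof (eventually_elim)
    case (elim w)
    note True = elim(3)
    show ?case
    proof -
      have "a w + b w \<le> max (a w) (2 * b w)" using elim(1) ennreal_minus_eq_0 g_def by metis
      then have "b w = 0 \<or> b w = a w" using enn_case[of "a w" "b w"] elim(2) ba[OF True] by (simp add: top.not_eq_extremum)
      then show ?thesis unfolding a_def b_def .
    qed
  qed
qed



theorem mainTheorem10:
  fixes M :: "'w measure"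
    and Y :: "'w \<Rightarrow> ('a::{t2_space, second_countable_topology}) set \<Rightarrow> ennreal"
  assumes "locally_compact_space (euclidean :: 'a topology)"
    and "prob_space M"
    and "random_sup_measure M Y"
    and "integrable_rsm M Y"
  shows "(AE w in M. scaled_indicator_sup_measure (Y w)) \<longleftrightarrow>
         (\<forall>f\<in>USC. (\<integral>\<^sup>+ w. extremal_integral f (Y w) \<partial>M) = (\<integral>\<^sup>+ w. choquet_integral f (Y w) \<partial>M))"
proof
  assume ae: "AE w in M. scaled_indicator_sup_measure (Y w)"
  show "\<forall>f\<in>USC. (\<integral>\<^sup>+ w. extremal_integral f (Y w) \<partial>M) = (\<integral>\<^sup>+ w. choquet_integral f (Y w) \<partial>M)"
  proof
    fix f :: "'a \<Rightarrow> real" assume f: "f \<in> USC"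
    have "AE w in M. extremal_integral f (Y w) = choquet_integral f (Y w)"
      using ae by eventually_elim (rule scaled_ext_eq_choq[OF _ f])
    then show "(\<integral>\<^sup>+ w. extremal_integral f (Y w) \<partial>M) = (\<integral>\<^sup>+ w. choquet_integral f (Y w) \<partial>M)"
      by (rule nn_integral_cong_AE)
  qed
next
  assume H: "\<forall>f\<in>USC. (\<integral>\<^sup>+ w. extremal_integral f (Y w) \<partial>M) = (\<integral>\<^sup>+ w. choquet_integral f (Y w) \<partial>M)"
  obtain B :: "'a set set" where cB: "countable B" and oB: "\<forall>U\<in>B. open U"
    and kB: "\<forall>U\<in>B. compact (closure U)" and bas: "\<And>S x. open S \<Longrightarrow> x \<in> S \<Longrightarrow> \<exists>U\<in>B. x \<in> U \<and> U \<subseteq> S"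
    using lc_basis[OF assms(1)] by metis
  have pair: "AE w in M. Y w (K \<inter> L) = 0 \<or> Y w (K \<inter> L) = Y w (K \<union> L)"
    if K: "K \<in> Dfam B" and L: "L \<in> Dfam B" for K L
  proof -
    have cK: "compact K" by (rule Dfam_compact[OF kB K])
    have cL: "compact L" by (rule Dfam_compact[OF kB L])
    show ?thesis
      by (rule ae_pair[OF assms(3) assms(4) cK cL H[rule_format, OF ind2_USC[OF cK cL]]])
  qed
  have cD: "countable (Dfam B)" by (rule Dfam_countable[OF cB])
  have P: "AE w in M. \<forall>K\<in>Dfam B. \<forall>L\<in>Dfam B. Y w (K \<inter> L) = 0 \<or> Y w (K \<inter> L) = Y w (K \<union> L)"
  proof (subst AE_ball_countable[OF cD], intro ballI)
    fix K assume K: "K \<in> Dfam B"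
    show "AE w in M. \<forall>L\<in>Dfam B. Y w (K \<inter> L) = 0 \<or> Y w (K \<inter> L) = Y w (K \<union> L)"
      by (subst AE_ball_countable[OF cD], intro ballI) (rule pair[OF K])
  qed
  moreover have "AE w in M. w \<in> space M" by (rule AE_space)
  ultimately show "AE w in M. scaled_indicator_sup_measure (Y w)"
  proof eventually_elim
    case (elim w)
    show ?case by (rule det[OF rsm_sup_measure[OF assms(3) elim(2)] cB oB kB bas elim(1)])
  qed
qed

end
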